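(* Let $\mathbb{S}=(S,\Sigma,\{\tau_a\mid a\in L\})$ be an LMP, let $\Sigma_0\subseteq\Sigma$ be a sub-$\sigma$-algebra with $\mathcal{R}(\Sigma_0)=\mathcal{R}^T(\Sigma_0)$, and put $R_0=\mathcal{R}(\Sigma_0)$. If $\lambda$ is a limit ordinal and $\Sigma(\mathcal{R}(\Sigma_\lambda))=\Sigma_\lambda$, then $\mathcal{R}(\Sigma_\lambda)$ is a state bisimulation.
   Context: An LMP is a triple $(S,\Sigma,\{\tau_a\mid a\in L\})$ with $(S,\Sigma)$ a measurable space, $L$ countable, and each $\tau_a:S\times\Sigma\to[0,1]$ a Markov kernel (subprobability measure in the second argument, measurable in the first). For $R\subseteq S\times S$, $A$ is $R$-closed if $x\in A$, $xRs$ imply $s\in A$; $\Sigma(R)$ is the family of $R$-closed members of $\Sigma$. For $\Gamma\subseteq\mathcal{P}(S)$, $\mathcal{R}(\Gamma)=\{(s,t):\forall A\in\Gamma\,(s\in A\iff t\in A)\}$; for $\Lambda\subseteq\Sigma$, $\mathcal{R}^T(\Lambda)=\{(s,t):\forall a\in L\,\forall E\in\Lambda\ \tau_a(s,E)=\tau_a(t,E)\}$. $\mathcal{O}(R)=\mathcal{R}^T(\Sigma(R))$, $\mathcal{G}(\Lambda)=\Sigma(\mathcal{R}^T(\Lambda))$. Iterates: $R_{\alpha+1}=\mathcal{O}(R_\alpha)$, $R_\lambda=\bigcap_{\alpha<\lambda}R_\alpha$ for limit $\lambda$; $\Sigma_{\alpha+1}=\mathcal{G}(\Sigma_\alpha)$,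 $\Sigma_\lambda=\sigma(\bigcup_{\alpha<\lambda}\Sigma_\alpha)$ for limit $\lambda$. A state bisimulation is a symmetric relation $R$ on $S$ such that whenever $sRt$ and $C\in\Sigma(R)$, $\tau_a(s,C)=\tau_a(t,C)$ for all $a\in L$. *)

theory Defs
  imports "HOL-Probability.Probability"
begin

text \<open>A labelled Markov process: measurable space M = (S, Sigma), countable label set L,
  and for each label a Markov kernel tau a : S -> subprobability measures on (S, Sigma).
  tau_a(s,E) is rendered as measure (tau a s) E.\<close>
definition LMP :: "'a measure \<Rightarrow> 'l set \<Rightarrow> ('l \<Rightarrow> 'a \<Rightarrow> 'a measure) \<Rightarrow> bool" where
  "LMP M L \<tau> \<longleftrightarrow> countable L \<and> (\<forall>a\<in>L. \<tau> a \<in> M \<rightarrow>\<^sub>M subprob_algebra M)"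

definition R_closed :: "('a \<times> 'a) set \<Rightarrow> 'a set \<Rightarrow> bool" where
  "R_closed R A \<longleftrightarrow> (\<forall>x s. x \<in> A \<longrightarrow> (x, s) \<in> R \<longrightarrow> s \<in> A)"

definition closed_sets :: "'a measure \<Rightarrow> ('a \<times> 'a) set \<Rightarrow> 'a set set" where
  "closed_sets M R = {A \<in> sets M. R_closed R A}"

definition rel_of :: "'a measure \<Rightarrow> 'a set set \<Rightarrow> ('a \<times> 'a) set" where
  "rel_of M \<Gamma> = {(s, t). s \<in> space M \<and> t \<in> space M \<and> (\<forall>A\<in>\<Gamma>. s \<in> A \<longleftrightarrow> t \<in> A)}"

definition relT :: "'a measure \<Rightarrow> 'l set \<Rightarrow> ('l \<Rightarrow> 'a \<Rightarrow> 'a measure) \<Rightarrow> 'a set set \<Rightarrow> ('a \<times> 'a) set" where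
  "relT M L \<tau> \<Lambda> = {(s, t). s \<in> space M \<and> t \<in> space M \<and>
      (\<forall>a\<in>L. \<forall>E\<in>\<Lambda>. measure (\<tau> a s) E = measure (\<tau> a t) E)}"

definition opG :: "'a measure \<Rightarrow> 'l set \<Rightarrow> ('l \<Rightarrow> 'a \<Rightarrow> 'a measure) \<Rightarrow> 'a set set \<Rightarrow> 'a set set" where
  "opG M L \<tau> \<Lambda> = closed_sets M (relT M L \<tau> \<Lambda>)"

text \<open>Ordinals are modelled as elements of an arbitrary well-ordered type 'o.
  alpha is zero if it has no predecessor, a successor if the set of its predecessors
  has a greatest element, and a limit otherwise.\<close>
definition is_limit :: "'o::wellorder \<Rightarrow> bool" where
  "is_limit \<alpha> \<longleftrightarrow> (\<exists>\<beta>. \<beta> < \<alpha>) \<and> \<not> (\<exists>\<beta><\<alpha>. \<forall>\<gamma><\<alpha>. \<gamma> \<le> \<beta>)"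

text \<open>Transfinite iterates: Sigma_0 given, Sigma_(alpha+1) = G(Sigma_alpha),
  Sigma_lambda = sigma(Union_{alpha<lambda} Sigma_alpha) for limit lambda.\<close>
definition sigma_iter :: "'a measure \<Rightarrow> 'l set \<Rightarrow> ('l \<Rightarrow> 'a \<Rightarrow> 'a measure) \<Rightarrow> 'a set set
    \<Rightarrow> 'o::wellorder \<Rightarrow> 'a set set" where
  "sigma_iter M L \<tau> \<Sigma>0 = wfrec {(x, y). x < y} (\<lambda>f \<alpha>.
      if \<not> (\<exists>\<beta>. \<beta> < \<alpha>) then \<Sigma>0
      else if (\<exists>\<beta><\<alpha>. \<forall>\<gamma><\<alpha>. \<gamma> \<le> \<beta>)
        then opG M L \<tau> (f (THE \<beta>. \<beta> < \<alpha> \<and> (\<forall>\<gamma><\<alpha>. \<gamma> \<le> \<beta>)))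
      else sigma_sets (space M) (\<Union>\<beta>\<in>{\<beta>. \<beta> < \<alpha>}. f \<beta>))"

definition state_bisim :: "'a measure \<Rightarrow> 'l set \<Rightarrow> ('l \<Rightarrow> 'a \<Rightarrow> 'a measure) \<Rightarrow> ('a \<times> 'a) set \<Rightarrow> bool" where
  "state_bisim M L \<tau> R \<longleftrightarrow> R \<subseteq> space M \<times> space M \<and> sym R \<and>
     (\<forall>s t. (s, t) \<in> R \<longrightarrow> (\<forall>C\<in>closed_sets M R. \<forall>a\<in>L. measure (\<tau> a s) C = measure (\<tau> a t) C))"

end

theory Submission imports Defs begin

lemma sigma_iter_eq:
  "sigma_iter M L \<tau> \<Sigma>0 (\<alpha>::'o::wellorder) = (if \<not> (\<exists>\<beta>. \<beta> < \<alpha>) then \<Sigma>0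
      else if (\<exists>\<beta><\<alpha>. \<forall>\<gamma><\<alpha>. \<gamma> \<le> \<beta>)
        then opG M L \<tau> (sigma_iter M L \<tau> \<Sigma>0 (THE \<beta>. \<beta> < \<alpha> \<and> (\<forall>\<gamma><\<alpha>. \<gamma> \<le> \<beta>)))
      else sigma_sets (space M) (\<Union>\<beta>\<in>{\<beta>. \<beta> < \<alpha>}. sigma_iter M L \<tau> \<Sigma>0 \<beta>))"
proof -
  have the: "(THE \<beta>. \<beta> < \<alpha> \<and> (\<forall>\<gamma><\<alpha>. \<gamma> \<le> \<beta>)) < \<alpha>" if "\<exists>\<beta><\<alpha>. \<forall>\<gamma><\<alpha>. \<gamma> \<le> \<beta>"
  proof -
    from that obtain b where b: "b < \<alpha>" "\<forall>\<gamma><\<alpha>. \<gamma> \<le> b" by blast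
    have "(THE \<beta>. \<beta> < \<alpha> \<and> (\<forall>\<gamma><\<alpha>. \<gamma> \<le> \<beta>)) = b"
      by (rule the_equality) (use b in \<open>auto intro: order.antisym\<close>)
    with b show ?thesis by simp
  qed
  show ?thesis
    unfolding sigma_iter_def
    apply (subst wfrec[OF wf])
    using the by (auto simp: cut_apply)
qed

lemma closed_sets_sigma:
  assumes "sym R" "R \<subseteq> space M \<times> space M"
  shows "sigma_algebra (space M) (closed_sets M R)"
  unfolding sigma_algebra_iff2 closed_sets_def R_closed_def
proof (intro conjI allI impI ballI)
  show "{A \<in> sets M. \<forall>x s. x \<in> A \<longrightarrow> (x, s) \<in> R \<longrightarrow> s \<in> A} \<subseteq> Pow (space M)"
    using sets.sets_into_space by auto
next
  fix s assume s: "s \<in> {A \<in> sets M. \<forall>x s. x \<in> A \<longrightarrow> (x, s) \<in> R \<longrightarrow> s \<in> A}"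
  then show "space M - s \<in> {A \<in> sets M. \<forall>x s. x \<in> A \<longrightarrow> (x, s) \<in> R \<longrightarrow> s \<in> A}"
    using assms by (auto simp: sym_def)
next
  fix A :: "nat \<Rightarrow> _" assume "range A \<subseteq> {A \<in> sets M. \<forall>x s. x \<in> A \<longrightarrow> (x, s) \<in> R \<longrightarrow> s \<in> A}"
  then show "\<Union> (range A) \<in> {A \<in> sets M. \<forall>x s. x \<in> A \<longrightarrow> (x, s) \<in> R \<longrightarrow> s \<in> A}"
    by auto
qed auto

lemma opG_sigma: "sigma_algebra (space M) (opG M L \<tau> \<Lambda>)"
  unfolding opG_def by (rule closed_sets_sigma) (auto simp: sym_def relT_def)

lemma opG_mono: "\<Lambda> \<subseteq> \<Lambda>' \<Longrightarrow> opG M L \<tau> \<Lambda> \<subseteq> opG M L \<tau> \<Lambda>'"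
  unfolding opG_def closed_sets_def R_closed_def relT_def by blast

lemma opG_sets: "opG M L \<tau> \<Lambda> \<subseteq> sets M"
  unfolding opG_def closed_sets_def by auto

lemma succ_props:
  fixes \<beta> lam :: "'o::wellorder"
  assumes "is_limit lam" "\<beta> < lam"
  defines "s \<equiv> LEAST \<gamma>. \<beta> < \<gamma>"
  shows "\<beta> < s" "s < lam" "\<exists>b<s. \<forall>\<gamma><s. \<gamma> \<le> b" "(THE b. b < s \<and> (\<forall>\<gamma><s. \<gamma> \<le> b)) = \<beta>"
proof -
  from assms obtain g where g: "g < lam" "\<beta> < g" unfolding is_limit_def by (meson not_le)
  show bs: "\<beta> < s" unfolding s_def using g by (metis LeastI)
  show "s < lam" unfolding s_def using g by (meson Least_le le_less_trans)
  have le: "\<gamma> \<le> \<beta>" if "\<gamma> < s" for \<gamma> using that unfolding s_def by (meson not_less_Least not_le)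
  show "\<exists>b<s. \<forall>\<gamma><s. \<gamma> \<le> b" using bs le by blast
  show "(THE b. b < s \<and> (\<forall>\<gamma><s. \<gamma> \<le> b)) = \<beta>"
    by (rule the_equality) (use bs le in \<open>auto intro: order.antisym\<close>)
qed

lemma iter_mono:
  assumes "\<Sigma>0 \<subseteq> opG M L \<tau> \<Sigma>0"
  shows "(\<forall>\<beta><\<gamma>. sigma_iter M L \<tau> \<Sigma>0 \<beta> \<subseteq> sigma_iter M L \<tau> \<Sigma>0 (\<gamma>::'o::wellorder))
     \<and> sigma_iter M L \<tau> \<Sigma>0 \<gamma> \<subseteq> opG M L \<tau> (sigma_iter M L \<tau> \<Sigma>0 \<gamma>)"
proof (induction \<gamma> rule: less_induct)
  case (less \<gamma>)
  let ?S = "sigma_iter M L \<tau> \<Sigma>0"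
  show ?case
  proof (cases "\<exists>\<beta>. \<beta> < \<gamma>")
    case False
    then show ?thesis using assms by (subst (1 2) sigma_iter_eq) auto
  next
    case True
    show ?thesis
    proof (cases "\<exists>\<beta><\<gamma>. \<forall>\<delta><\<gamma>. \<delta> \<le> \<beta>")
      case T2: True
      then obtain p where p: "p < \<gamma>" "\<forall>\<delta><\<gamma>. \<delta> \<le> p" by blast
      have th: "(THE \<beta>. \<beta> < \<gamma> \<and> (\<forall>\<delta><\<gamma>. \<delta> \<le> \<beta>)) = p"
        by (rule the_equality) (use p in \<open>auto intro: order.antisym\<close>)
      have eq: "?S \<gamma> = opG M L \<tau> (?S p)"
        using True T2 th by (subst sigma_iter_eq) simp
      have IHp: "\<forall>\<beta><p. ?S \<beta> \<subseteq> ?S p" "?S p \<subseteq> opG M L \<tau> (?S p)" using less p by auto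
      have sub: "?S p \<subseteq> ?S \<gamma>" using IHp eq by simp
      have "\<forall>\<beta><\<gamma>. ?S \<beta> \<subseteq> ?S \<gamma>"
      proof (intro allI impI)
        fix \<beta> assume "\<beta> < \<gamma>"
        then have "\<beta> < p \<or> \<beta> = p" using p by (auto simp: le_less)
        then show "?S \<beta> \<subseteq> ?S \<gamma>" using IHp sub by blast
      qed
      moreover have "?S \<gamma> \<subseteq> opG M L \<tau> (?S \<gamma>)"
        using eq sub opG_mono by metis
      ultimately show ?thesis by blast
    next
      case F2: False
      have eq: "?S \<gamma> = sigma_sets (space M) (\<Union>\<beta>\<in>{\<beta>. \<beta> < \<gamma>}. ?S \<beta>)"
        apply (subst sigma_iter_eq)
        apply (subst if_not_P)
        using True apply blast
        apply (subst if_not_P[OF F2])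
        by (rule refl)
      have A: "\<forall>\<beta><\<gamma>. ?S \<beta> \<subseteq> ?S \<gamma>"
        unfolding eq by (auto intro: sigma_sets.Basic)
      have "\<forall>\<beta><\<gamma>. ?S \<beta> \<subseteq> opG M L \<tau> (?S \<gamma>)"
        using A less opG_mono by (metis order.trans)
      then have U: "(\<Union>\<beta>\<in>{\<beta>. \<beta> < \<gamma>}. ?S \<beta>) \<subseteq> opG M L \<tau> (?S \<gamma>)" by blast
      have "?S \<gamma> \<subseteq> opG M L \<tau> (?S \<gamma>)"
        unfolding eq[symmetric]
        using sigma_algebra.sigma_sets_subset[OF opG_sigma U] eq by simp
      with A show ?thesis by blast
    qed
  qed
qed


lemma measurable_level_set:
  assumes K: "K \<in> M \<rightarrow>\<^sub>M subprob_algebra M" and E: "E \<in> sets M"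
  shows "{x \<in> space M. measure (K x) E = c} \<in> sets M"
proof -
  have f: "(\<lambda>x. measure (K x) E) \<in> borel_measurable M"
    using measurable_compose[OF K measurable_measure_subprob_algebra[OF E]] by simp
  show ?thesis using f by measurable
qed

theorem corollary3p10:
  fixes M :: "'a measure" and L :: "'l set" and \<tau> :: "'l \<Rightarrow> 'a \<Rightarrow> 'a measure"
    and \<Sigma>0 :: "'a set set" and lam :: "'o::wellorder"
  assumes "LMP M L \<tau>"
    and "sigma_algebra (space M) \<Sigma>0" and "\<Sigma>0 \<subseteq> sets M"
    and "rel_of M \<Sigma>0 = relT M L \<tau> \<Sigma>0"
    and "is_limit lam"
    and "closed_sets M (rel_of M (sigma_iter M L \<tau> \<Sigma>0 lam)) = sigma_iter M L \<tau> \<Sigma>0 lam"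
  shows "state_bisim M L \<tau> (rel_of M (sigma_iter M L \<tau> \<Sigma>0 lam))"
proof -
  let ?S = "sigma_iter M L \<tau> \<Sigma>0"
  define G where "G = (\<Union>\<beta>\<in>{\<beta>. \<beta> < lam}. ?S \<beta>)"
  let ?R = "rel_of M (?S lam)"
  have kern: "\<tau> a \<in> M \<rightarrow>\<^sub>M subprob_algebra M" if "a \<in> L" for a
    using assms(1) that unfolding LMP_def by blast
  have h0: "\<Sigma>0 \<subseteq> opG M L \<tau> \<Sigma>0"
    using assms(3) unfolding opG_def closed_sets_def R_closed_def assms(4)[symmetric]
    unfolding rel_of_def by auto
  note mono = iter_mono[OF h0]
  have Ssets: "?S \<beta> \<subseteq> sets M" for \<beta> :: 'o
    using mono[of \<beta>] opG_sets by blast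
  have ex: "\<exists>\<beta>. \<beta> < lam" and nsucc: "\<not> (\<exists>\<beta><lam. \<forall>\<gamma><lam. \<gamma> \<le> \<beta>)"
    using assms(5) unfolding is_limit_def by auto
  have limeq: "?S lam = sigma_sets (space M) G"
    unfolding G_def
    apply (subst sigma_iter_eq)
    apply (subst if_not_P)
    using ex apply blast
    apply (subst if_not_P[OF nsucc])
    by (rule refl)
  have succ: "opG M L \<tau> (?S \<beta>) \<subseteq> G" if "\<beta> < lam" for \<beta>
  proof -
    define s where "s = (LEAST \<gamma>. \<beta> < \<gamma>)"
    note sp = succ_props[OF assms(5) that, folded s_def]
    have "?S s = opG M L \<tau> (?S \<beta>)"
      apply (subst sigma_iter_eq)
      using sp by auto
    then show ?thesis using sp unfolding G_def by blast
  qed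
  have GP: "G \<subseteq> Pow (space M)" unfolding G_def using Ssets sets.sets_into_space by blast
  have Gsets: "G \<subseteq> sets M" unfolding G_def using Ssets by blast
  have GSl: "G \<subseteq> ?S lam" unfolding limeq by (auto intro: sigma_sets.Basic)
  have key: "measure (\<tau> a s) E = measure (\<tau> a t) E"
    if st: "(s, t) \<in> ?R" and a: "a \<in> L" and E: "E \<in> G" for s t a E
  proof -
    from E obtain \<beta> where b: "\<beta> < lam" "E \<in> ?S \<beta>" unfolding G_def by blast
    have Em: "E \<in> sets M" using b Ssets by blast
    define X where "X = {x \<in> space M. measure (\<tau> a x) E = measure (\<tau> a s) E}"
    have "X \<in> sets M" unfolding X_def by (rule measurable_level_set[OF kern[OF a] Em])
    moreover have "R_closed (relT M L \<tau> (?S \<beta>)) X"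
      unfolding R_closed_def X_def relT_def using a b by auto
    ultimately have "X \<in> opG M L \<tau> (?S \<beta>)" unfolding opG_def closed_sets_def by blast
    then have "X \<in> ?S lam" using succ[OF b(1)] GSl by blast
    moreover have "s \<in> X" using st unfolding X_def rel_of_def by auto
    ultimately have "t \<in> X" using st unfolding rel_of_def by blast
    then show ?thesis unfolding X_def by simp
  qed
  have Int: "Int_stable G"
  proof (rule Int_stableI)
    fix A B assume "A \<in> G" "B \<in> G"
    then obtain b1 b2 where b: "b1 < lam" "A \<in> ?S b1" "b2 < lam" "B \<in> ?S b2"
      unfolding G_def by blast
    obtain b where bb: "b < lam" "A \<in> ?S b" "B \<in> ?S b"
    proof (cases "b1 \<le> b2")
      case True
      then have "?S b1 \<subseteq> ?S b2" using mono[of b2] by (auto simp: le_less)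
      then show ?thesis using that b by blast
    next
      case False
      then have "?S b2 \<subseteq> ?S b1" using mono[of b1] by (auto simp: not_le)
      then show ?thesis using that b by blast
    qed
    have "A \<in> opG M L \<tau> (?S b)" "B \<in> opG M L \<tau> (?S b)" using bb mono[of b] by auto
    note AB = this
    interpret sa: sigma_algebra "space M" "opG M L \<tau> (?S b)" by (rule opG_sigma)
    have "A \<inter> B \<in> opG M L \<tau> (?S b)" using AB by blast
    then show "A \<inter> B \<in> G" using succ[OF bb(1)] by blast
  qed
  have spG: "space M \<in> G"
  proof -
    from ex obtain b where "b < lam" by blast
    moreover have "space M \<in> opG M L \<tau> (?S b)"
    proof -
      interpret sa: sigma_algebra "space M" "opG M L \<tau> (?S b)" by (rule opG_sigma)
      show ?thesis by (rule sa.top)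
    qed
    ultimately show ?thesis using succ by blast
  qed
  have main: "measure (\<tau> a s) C = measure (\<tau> a t) C"
    if st: "(s, t) \<in> ?R" and a: "a \<in> L" and C: "C \<in> ?S lam" for s t a C
  proof -
    have sp: "s \<in> space M" "t \<in> space M" using st unfolding rel_of_def by auto
    have sub: "subprob_space (\<tau> a s)" "sets (\<tau> a s) = sets M"
      "subprob_space (\<tau> a t)" "sets (\<tau> a t) = sets M"
      using measurable_space[OF kern[OF a] sp(1)] measurable_space[OF kern[OF a] sp(2)]
      by (auto simp: space_subprob_algebra)
    have spc: "space (\<tau> a s) = space M" "space (\<tau> a t) = space M"
      using sub sets_eq_imp_space_eq by blast+
    interpret s: subprob_space "\<tau> a s" by (rule sub(1))
    interpret t: subprob_space "\<tau> a t" by (rule sub(3))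
    have ssub: "sigma_sets (space M) G \<subseteq> sets M"
      using sets.sigma_sets_subset[OF Gsets] .
    from Int GP C[unfolded limeq] show ?thesis
    proof (induction rule: sigma_sets_induct_disjoint)
      case (basic A) then show ?case by (rule key[OF st a])
    next
      case empty then show ?case by simp
    next
      case (compl A)
      have Am: "A \<in> sets (\<tau> a s)" "A \<in> sets (\<tau> a t)" using compl.hyps ssub sub by auto
      have "measure (\<tau> a s) (space M - A) = measure (\<tau> a s) (space M) - measure (\<tau> a s) A"
        using s.finite_measure_compl[OF Am(1)] spc by simp
      also have "\<dots> = measure (\<tau> a t) (space M) - measure (\<tau> a t) A"
        using key[OF st a spG] compl.IH by simp
      also have "\<dots> = measure (\<tau> a t) (space M - A)"
        using t.finite_measure_compl[OF Am(2)] spc by simp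
      finally show ?case .
    next
      case (union A)
      have r: "range A \<subseteq> sets (\<tau> a s)" "range A \<subseteq> sets (\<tau> a t)" using union.hyps ssub sub by auto
      have "(\<lambda>i. measure (\<tau> a s) (A i)) sums measure (\<tau> a s) (\<Union>i. A i)"
        using s.finite_measure_UNION[OF r(1) union.hyps(1)] .
      moreover have "(\<lambda>i. measure (\<tau> a t) (A i)) sums measure (\<tau> a t) (\<Union>i. A i)"
        using t.finite_measure_UNION[OF r(2) union.hyps(1)] .
      moreover have "(\<lambda>i. measure (\<tau> a s) (A i)) = (\<lambda>i. measure (\<tau> a t) (A i))"
        using union.IH by simp
      ultimately show ?case by (metis sums_unique2)
    qed
  qed
  show ?thesis
    unfolding state_bisim_def
  proof (intro conjI allI impI ballI)
    show "?R \<subseteq> space M \<times> space M" unfolding rel_of_def by auto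
    show "sym ?R" unfolding rel_of_def sym_def by auto
  next
    fix s t C a assume "(s, t) \<in> ?R" "C \<in> closed_sets M ?R" "a \<in> L"
    then show "measure (\<tau> a s) C = measure (\<tau> a t) C" using main assms(6) by blast
  qed
qed

end
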